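(* Suppose $\tau\in(1,2)$ is the smallest $x\ge1$ such that $\omega'(x)=0$. Then $\tau>1.732$.
   Context: For $x\ge1$ let $\psi_1(x)=\frac32\int_0^{\pi/2}(1-x^{-2}\sin^2u)^{3/2}\,du$ and $\psi_2(x)=\frac32(1-x^{-2})^2\int_0^{\pi/2}\frac{\sin^4v}{\sqrt{1-(1-x^{-2})\sin^2v}}\,dv$, and $\omega(x)=\psi_2'(x)\psi_1(x)-\psi_2(x)\psi_1'(x)$. *)

theory Defs
  imports "HOL-Analysis.Analysis"
begin

definition psi1 :: "real \<Rightarrow> real" where
  "psi1 x = 3/2 * integral {0..pi/2} (\<lambda>u. (1 - sin u ^ 2 / x ^ 2) powr (3/2))"

definition psi2 :: "real \<Rightarrow> real" where
  "psi2 x = 3/2 * (1 - 1 / x ^ 2) ^ 2 *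
     integral {0..pi/2} (\<lambda>v. sin v ^ 4 / sqrt (1 - (1 - 1 / x ^ 2) * sin v ^ 2))"

definition dR :: "(real \<Rightarrow> real) \<Rightarrow> real \<Rightarrow> real" where
  "dR f x = (THE D. (f has_real_derivative D) (at x within {1..}))"

definition omega :: "real \<Rightarrow> real" where
  "omega x = dR psi2 x * psi1 x - psi2 x * dR psi1 x"

end

theory Submission imports Defs begin

definition G :: "nat \<Rightarrow> real \<Rightarrow> real" where
  "G k a = integral {0..pi/2} (\<lambda>u. sin u ^ (2*k) * (1 - a * sin u ^ 2) powr (3/2 - real k))"

lemma base_lt: fixes a u :: real assumes "a < 1" shows "a * sin u ^ 2 < 1"
proof -
  have s1: "sin u ^ 2 \<le> 1" using abs_sin_le_one[of u] by (simp add: abs_square_le_1)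
  show ?thesis
  proof (cases "a \<le> 0")
    case True then have "a * sin u ^ 2 \<le> 0" by (simp add: mult_nonpos_nonneg)
    then show ?thesis by simp
  next
    case False then have "a * sin u ^ 2 \<le> a" using s1 by (simp add: mult_left_le)
    then show ?thesis using assms by simp
  qed
qed

lemma base_pos: fixes a u :: real assumes "a < 1" shows "0 < 1 - a * sin u ^ 2"
  using base_lt[OF assms, of u] by linarith

lemma G_deriv:
  assumes "0 < a" "a < 1"
  shows "(G k has_real_derivative (-(3/2 - real k) * G (Suc k) a)) (at a)"
proof -
  let ?U = "{0<..<(1::real)}"
  have "((\<lambda>a. integral (cbox 0 (pi/2)) (\<lambda>u. sin u ^ (2*k) * (1 - a * sin u ^ 2) powr (3/2 - real k)))
     has_field_derivative integral (cbox 0 (pi/2)) (\<lambda>u. -(3/2 - real k) * (sin u ^ (2*Suc k) * (1 - a * sin u ^ 2) powr (3/2 - real (Suc k)))))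
     (at a within ?U)"
  proof (rule leibniz_rule_field_derivative)
    fix x t assume x: "x \<in> ?U" and t: "t \<in> cbox 0 (pi/2::real)"
    have bp: "0 < 1 - x * sin t ^ 2" using x by (intro base_pos) auto
    show "((\<lambda>x. sin t ^ (2*k) * (1 - x * sin t ^ 2) powr (3/2 - real k)) has_field_derivative
       -(3/2 - real k) * (sin t ^ (2*Suc k) * (1 - x * sin t ^ 2) powr (3/2 - real (Suc k)))) (at x within ?U)"
    proof (rule has_field_derivative_at_within)
      have d1: "((\<lambda>x. 1 - x * sin t ^ 2) has_real_derivative (-(sin t ^ 2))) (at x)"
        by (auto intro!: derivative_eq_intros)
      have d2: "((\<lambda>x. (1 - x * sin t ^ 2) powr (3/2 - real k)) has_real_derivative
          (3/2 - real k) * (1 - x * sin t ^ 2) powr (3/2 - real k - 1) * (-(sin t ^ 2))) (at x)"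
        using DERIV_chain2[OF has_real_derivative_powr[OF bp] d1] .
      have e: "sin t ^ (2*k) * ((3/2 - real k) * (1 - x * sin t ^ 2) powr (3/2 - real k - 1) * (-(sin t ^ 2)))
         = -(3/2 - real k) * (sin t ^ (2*Suc k) * (1 - x * sin t ^ 2) powr (3/2 - real (Suc k)))"
        by (simp add: power_add algebra_simps power2_eq_square)
      show "((\<lambda>x. sin t ^ (2*k) * (1 - x * sin t ^ 2) powr (3/2 - real k)) has_real_derivative
       -(3/2 - real k) * (sin t ^ (2*Suc k) * (1 - x * sin t ^ 2) powr (3/2 - real (Suc k)))) (at x)"
        using DERIV_cmult[OF d2, of "sin t ^ (2*k)"] e by simp
    qed
  next
    fix x assume x: "x \<in> ?U"
    show "(\<lambda>u. sin u ^ (2*k) * (1 - x * sin u ^ 2) powr (3/2 - real k)) integrable_on cbox 0 (pi/2)"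
      using x base_lt[of x] by (intro integrable_continuous continuous_intros) (auto simp: less_le)
  next
    show "continuous_on (?U \<times> cbox 0 (pi/2)) (\<lambda>(x, u). -(3/2 - real k) * (sin u ^ (2*Suc k) * (1 - x * sin u ^ 2) powr (3/2 - real (Suc k))))"
      using base_lt by (auto simp: split_beta intro!: continuous_intros) (metis less_irrefl)
  qed (use assms in auto)
  moreover have "at a within ?U = at a" using assms by (intro at_within_open) auto
  ultimately show ?thesis unfolding G_def cbox_interval
    by (simp add: integral_mult_right)
qed

lemma powr_conv: fixes w :: real assumes "w > 0" shows "w powr (3/2 - real k) = sqrt w ^ 3 / w ^ k"
proof -
  have "w powr (3/2 - real k) = w powr (3/2) / w powr real k" by (rule powr_diff)
  also have "w powr real k = w ^ k" using assms by (rule powr_realpow)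
  also have "w powr (3/2) = w powr (real 3 * (1/2))" by simp
  also have "\<dots> = (w powr (1/2)) powr real 3" by (simp only: powr_powr mult.commute)
  also have "\<dots> = (w powr (1/2)) ^ 3" using assms by (intro powr_realpow) simp
  also have "w powr (1/2) = sqrt w" using assms by (simp add: powr_half_sqrt)
  finally show ?thesis .
qed
definition h :: "nat \<Rightarrow> real \<Rightarrow> real \<Rightarrow> real" where
  "h k a u = sin u ^ (2*k) * (1 - a * sin u ^ 2) powr (3/2 - real k)"

lemma h_int: assumes "a < 1" shows "h k a integrable_on {0..pi/2}"
  unfolding h_def using base_lt[of a] assms
  by (intro integrable_continuous_interval continuous_intros) (auto simp: less_le)

lemma h_has_int: assumes "a < 1" shows "(h k a has_integral G k a) {0..pi/2}"
  using h_int[OF assms] unfolding G_def h_def[abs_def] by (simp add: integrable_integral)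

lemma h_sqrt: assumes "a < 1" shows "h k a u = sin u ^ (2*k) * sqrt (1 - a * sin u ^ 2) ^ 3 / (1 - a * sin u ^ 2) ^ k"
  unfolding h_def using powr_conv[OF base_pos[OF assms]] by simp

lemma ident1: assumes "0 < a" "a < 1" shows "a*(1-a)*G 2 a - 2*G 1 a + G 0 a = 0"
proof -
  define g where "g u = sin u * cos u * sqrt (1 - a * sin u ^ 2)" for u
  define g' where "g' u = a*(1-a)*h 2 a u - 2*h 1 a u + h 0 a u" for u
  have "(g' has_integral (g (pi/2) - g 0)) {0..pi/2}"
  proof (rule fundamental_theorem_of_calculus)
    fix x assume "x \<in> {0..pi/2}"
    have bp: "0 < 1 - a * sin x ^ 2" using assms by (intro base_pos) auto
    have "(g has_real_derivative g' x) (at x)"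
    proof -
      define q where "q = sqrt (1 - a * sin x ^ 2)"
      have q0: "q > 0" using bp by (simp add: q_def)
      have q2: "q ^ 2 = 1 - a * sin x ^ 2" using bp by (simp add: q_def)
      have c2: "cos x ^ 2 = 1 - sin x ^ 2" by (simp add: cos_squared_eq)
      have dw: "((\<lambda>x. 1 - a * sin x ^ 2) has_real_derivative (- (a * (2 * sin x * cos x)))) (at x)"
        by (auto intro!: derivative_eq_intros)
      have dq: "((\<lambda>x. sqrt (1 - a * sin x ^ 2)) has_real_derivative inverse q / 2 * (- (a * (2 * sin x * cos x)))) (at x)"
        using DERIV_chain2[OF DERIV_real_sqrt[OF bp] dw] by (simp add: q_def)
      have dsc: "((\<lambda>x. sin x * cos x) has_real_derivative cos x * cos x + sin x * (- sin x)) (at x)"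
        by (auto intro!: derivative_eq_intros)
      have dg: "(g has_real_derivative (cos x * cos x + sin x * (- sin x)) * q + sin x * cos x * (inverse q / 2 * (- (a * (2 * sin x * cos x))))) (at x)"
        unfolding g_def using DERIV_mult[OF dsc dq] by (simp add: q_def mult_ac)
      have hq: "h k a x = sin x ^ (2*k) * q ^ 3 / (q^2) ^ k" for k
        using h_sqrt[of a k x] assms q2 by (simp add: q_def)
      have "(cos x * cos x + sin x * (- sin x)) * q + sin x * cos x * (inverse q / 2 * (- (a * (2 * sin x * cos x)))) = g' x"
        unfolding g'_def hq using q0
        apply (simp add: field_simps)
        using q2 c2 by algebra
      then show ?thesis using dg by simp
    qed
    then show "(g has_vector_derivative g' x) (at x within {0..pi/2})"
      by (metis has_real_derivative_iff_has_vector_derivative has_vector_derivative_at_within)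
  qed simp
  moreover have "g (pi/2) = 0" "g 0 = 0" by (simp_all add: g_def)
  moreover have "(g' has_integral (a*(1-a)*G 2 a - 2*G 1 a + G 0 a)) {0..pi/2}"
    unfolding g'_def[abs_def] using assms
    by (intro has_integral_add has_integral_diff has_integral_mult_right h_has_int) auto
  ultimately show ?thesis by (metis has_integral_unique diff_self)
qed

lemma ident2: assumes "0 < a" "a < 1" shows "3*a*(1-a)*G 4 a + 2*(3-4*a)*G 3 a - 5*G 2 a = 0"
proof -
  define g where "g u = sin u ^ 5 * cos u / sqrt (1 - a * sin u ^ 2) ^ 3" for u
  define g' where "g' u = -(3*a*(1-a)*h 4 a u + 2*(3-4*a)*h 3 a u - 5*h 2 a u)" for u
  have "(g' has_integral (g (pi/2) - g 0)) {0..pi/2}"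
  proof (rule fundamental_theorem_of_calculus)
    fix x assume "x \<in> {0..pi/2}"
    have bp: "0 < 1 - a * sin x ^ 2" using assms by (intro base_pos) auto
    have "(g has_real_derivative g' x) (at x)"
    proof -
      define q where "q = sqrt (1 - a * sin x ^ 2)"
      have q0: "q > 0" using bp by (simp add: q_def)
      have q2: "q ^ 2 = 1 - a * sin x ^ 2" using bp by (simp add: q_def)
      have c2: "cos x ^ 2 = 1 - sin x ^ 2" by (simp add: cos_squared_eq)
      have dw: "((\<lambda>x. 1 - a * sin x ^ 2) has_real_derivative (- (a * (2 * sin x * cos x)))) (at x)"
        by (auto intro!: derivative_eq_intros)
      have dq: "((\<lambda>x. sqrt (1 - a * sin x ^ 2)) has_real_derivative inverse q / 2 * (- (a * (2 * sin x * cos x)))) (at x)"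
        using DERIV_chain2[OF DERIV_real_sqrt[OF bp] dw] by (simp add: q_def)
      have dq3: "((\<lambda>x. sqrt (1 - a * sin x ^ 2) ^ 3) has_real_derivative real 3 * q ^ (3 - 1) * (inverse q / 2 * (- (a * (2 * sin x * cos x))))) (at x)"
        using DERIV_chain2[OF DERIV_pow dq, of 3] by (simp add: q_def)
      have ds5: "((\<lambda>x. sin x ^ 5) has_real_derivative real 5 * sin x ^ (5 - 1) * cos x) (at x)"
        using DERIV_chain2[OF DERIV_pow DERIV_sin, of 5 x] by simp
      have dsc: "((\<lambda>x. sin x ^ 5 * cos x) has_real_derivative (real 5 * sin x ^ (5 - 1) * cos x) * cos x + sin x ^ 5 * (- sin x)) (at x)"
        using DERIV_mult[OF ds5 DERIV_cos] by (simp add: mult_ac)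
      have dg: "(g has_real_derivative (((real 5 * sin x ^ (5 - 1) * cos x) * cos x + sin x ^ 5 * (- sin x)) * q^3 - sin x ^ 5 * cos x * (real 3 * q ^ (3 - 1) * (inverse q / 2 * (- (a * (2 * sin x * cos x)))))) / (q^3 * q^3)) (at x)"
        unfolding g_def using DERIV_divide[OF dsc dq3] q0 by (simp add: q_def)
      have hq: "h k a x = sin x ^ (2*k) * q ^ 3 / (q^2) ^ k" for k
        using h_sqrt[of a k x] assms q2 by (simp add: q_def)
      have "(((real 5 * sin x ^ (5 - 1) * cos x) * cos x + sin x ^ 5 * (- sin x)) * q^3 - sin x ^ 5 * cos x * (real 3 * q ^ (3 - 1) * (inverse q / 2 * (- (a * (2 * sin x * cos x)))))) / (q^3 * q^3) = g' x"
        unfolding g'_def hq using q0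
        apply (simp add: field_simps)
        using q2 c2 by algebra
      then show ?thesis using dg by simp
    qed
    then show "(g has_vector_derivative g' x) (at x within {0..pi/2})"
      by (metis has_real_derivative_iff_has_vector_derivative has_vector_derivative_at_within)
  qed simp
  moreover have "g (pi/2) = 0" "g 0 = 0" by (simp_all add: g_def)
  moreover have "(g' has_integral -(3*a*(1-a)*G 4 a + 2*(3-4*a)*G 3 a - 5*G 2 a)) {0..pi/2}"
    unfolding g'_def[abs_def] using assms
    by (intro has_integral_neg has_integral_add has_integral_diff has_integral_mult_right h_has_int) auto
  ultimately show ?thesis by (metis has_integral_unique diff_self neg_equal_0_iff_equal)
qed

lemma fact_aux0: fixes d a X Z :: real assumes "d \<noteq> 0"
  shows "1/d^2 * X + a/d * Z = (1/d^2) * (X + a*d * Z)"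
proof -
  have "(1/d^2) * (X + a*d * Z) = 1/d^2 * X + (a*Z) * (d/d^2)" by (simp add: algebra_simps add_divide_distrib)
  moreover have "d/d^2 = 1/d" using assms by (simp add: power2_eq_square)
  ultimately show ?thesis by simp
qed

lemma fact_aux: fixes a X Z :: real assumes "1 - a \<noteq> 0"
  shows "1/(1-a)^2 * X + a/(1-a) * Z = (1/(1-a)^2) * (X + a*(1-a) * Z)"
  using fact_aux0[OF assms] .

lemma wr:
  fixes Y1 D1 DD1 Y2 D2 DD2 :: "real \<Rightarrow> real" and a :: real
  assumes a: "0 < a" "a < 1"
    and d1: "(Y1 has_real_derivative D1 a) (at a)" and dd1: "(D1 has_real_derivative DD1 a) (at a)"
    and d2: "(Y2 has_real_derivative D2 a) (at a)" and dd2: "(D2 has_real_derivative DD2 a) (at a)"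
    and o1: "a*(1-a)*DD1 a + D1 a + 3/4 * Y1 a = 0"
    and o2: "a*(1-a)*DD2 a + D2 a + 3/4 * Y2 a = 0"
  shows "((\<lambda>a. a/(1-a) * (Y1 a * D2 a - D1 a * Y2 a)) has_real_derivative 0) (at a)"
proof -
  have dq: "((\<lambda>a. a/(1-a)) has_real_derivative 1/(1-a)^2) (at a)"
    using a by (auto intro!: derivative_eq_intros simp: field_simps power2_eq_square)
  have dw: "((\<lambda>a. Y1 a * D2 a - D1 a * Y2 a) has_real_derivative Y1 a * DD2 a - DD1 a * Y2 a) (at a)"
    using DERIV_diff[OF DERIV_mult[OF d1 dd2] DERIV_mult[OF dd1 d2]] by (simp add: algebra_simps)
  have e: "1/(1-a)^2 * (Y1 a * D2 a - D1 a * Y2 a) + a/(1-a) * (Y1 a * DD2 a - DD1 a * Y2 a) = 0"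
  proof -
    have e1: "a*(1-a)*DD1 a = - D1 a - 3/4 * Y1 a" and e2: "a*(1-a)*DD2 a = - D2 a - 3/4 * Y2 a" using o1 o2 by linarith+
    have "a*(1-a)*(Y1 a * DD2 a - DD1 a * Y2 a) = Y1 a * (a*(1-a)*DD2 a) - Y2 a * (a*(1-a)*DD1 a)"
      by (simp only: right_diff_distrib mult_ac)
    also have "\<dots> = Y1 a * (- D2 a - 3/4 * Y2 a) - Y2 a * (- D1 a - 3/4 * Y1 a)" by (simp only: e1 e2)
    also have "\<dots> = -(Y1 a * D2 a - D1 a * Y2 a)" by (simp only: right_diff_distrib mult_ac minus_diff_eq mult_minus_right)
    finally have k: "a*(1-a)*(Y1 a * DD2 a - DD1 a * Y2 a) = -(Y1 a * D2 a - D1 a * Y2 a)" .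
    have na: "1 - a \<noteq> 0" using a by simp
    have "1/(1-a)^2 * (Y1 a * D2 a - D1 a * Y2 a) + a/(1-a) * (Y1 a * DD2 a - DD1 a * Y2 a)
       = (1/(1-a)^2) * ((Y1 a * D2 a - D1 a * Y2 a) + a*(1-a) * (Y1 a * DD2 a - DD1 a * Y2 a))"
      using fact_aux[OF na] .
    then show ?thesis using k by simp
  qed
  show ?thesis using DERIV_mult[OF dq dw] e by (simp add: mult.commute)
qed

definition "Y1 a = G 0 a"
definition "D1 a = -(3/2) * G 1 a"
definition "DD1 a = 3/4 * G 2 a"
definition "Y2 a = (1-a)^2 * G 2 (1-a)"
definition "D2 a = -(2*(1-a)*G 2 (1-a) + (1-a)^2 * (1/2) * G 3 (1-a))"
definition "DD2 a = 2*G 2 (1-a) + 2*(1-a)*G 3 (1-a) + 3/4*(1-a)^2*G 4 (1-a)"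

lemma G_deriv2: assumes "0 < a" "a < 1" "m = Suc k"
  shows "(G k has_real_derivative (-(3/2 - real k) * G m a)) (at a)"
  using G_deriv[OF assms(1,2)] assms(3) by simp

lemma Gc_deriv: assumes "0 < a" "a < 1" "m = Suc k"
  shows "((\<lambda>a. G k (1-a)) has_real_derivative (3/2 - real k) * G m (1-a)) (at a)"
proof -
  have l: "((\<lambda>a::real. 1-a) has_real_derivative -1) (at a)" by (auto intro!: derivative_eq_intros)
  have "0 < 1 - a" "1 - a < 1" using assms by auto
  from DERIV_chain2[OF G_deriv2[OF this assms(3)] l] show ?thesis
    by (rule DERIV_cong) (simp add: algebra_simps)
qed

lemma Y1_d: "0 < a \<Longrightarrow> a < 1 \<Longrightarrow> (Y1 has_real_derivative D1 a) (at a)"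
  unfolding Y1_def[abs_def] D1_def using G_deriv2[of a 1 0] by simp

lemma D1_d: "0 < a \<Longrightarrow> a < 1 \<Longrightarrow> (D1 has_real_derivative DD1 a) (at a)"
  unfolding D1_def[abs_def] DD1_def by (rule DERIV_cong[OF DERIV_cmult[OF G_deriv2[of a 2 1]]]) auto

lemma Y2_d: assumes "0 < a" "a < 1" shows "(Y2 has_real_derivative D2 a) (at a)"
proof -
  have p: "((\<lambda>a::real. (1-a)^2) has_real_derivative -(2*(1-a))) (at a)" by (auto intro!: derivative_eq_intros)
  show ?thesis
    unfolding Y2_def[abs_def] D2_def
    by (rule DERIV_cong[OF DERIV_mult[OF p Gc_deriv[OF assms, of 3 2]]]) (auto simp: algebra_simps)
qed

lemma D2_d: assumes "0 < a" "a < 1" shows "(D2 has_real_derivative DD2 a) (at a)"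
proof -
  have p: "((\<lambda>a::real. (1-a)) has_real_derivative -1) (at a)" by (auto intro!: derivative_eq_intros)
  have p2: "((\<lambda>a::real. (1-a)^2) has_real_derivative -(2*(1-a))) (at a)" by (auto intro!: derivative_eq_intros)
  have A: "((\<lambda>a. 2*((1-a)*G 2 (1-a))) has_real_derivative -(2*G 2 (1-a)) - (1-a)*G 3 (1-a)) (at a)"
    by (rule DERIV_cong[OF DERIV_cmult[OF DERIV_mult[OF p Gc_deriv[OF assms, of 3 2]]]]) (simp_all add: field_simps)
  have B: "((\<lambda>a. (1/2) * ((1-a)^2 * G 3 (1-a))) has_real_derivative -((1-a)*G 3 (1-a)) - 3/4*(1-a)^2 * G 4 (1-a)) (at a)"
    by (rule DERIV_cong[OF DERIV_cmult[OF DERIV_mult[OF p2 Gc_deriv[OF assms, of 4 3]]]]) (simp_all add: field_simps)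
  have e: "D2 = (\<lambda>a. -(2*((1-a)*G 2 (1-a)) + (1/2) * ((1-a)^2 * G 3 (1-a))))"
    unfolding D2_def[abs_def] by (simp add: algebra_simps)
  show ?thesis unfolding e DD2_def
    by (rule DERIV_cong[OF DERIV_minus[OF DERIV_add[OF A B]]]) (simp add: algebra_simps)
qed

lemma o1: assumes "0 < a" "a < 1" shows "a*(1-a)*DD1 a + D1 a + 3/4 * Y1 a = 0"
proof -
  have "a*(1-a)*DD1 a + D1 a + 3/4 * Y1 a = 3/4 * (a*(1-a)*G 2 a - 2*G 1 a + G 0 a)"
    unfolding DD1_def D1_def Y1_def by (simp add: field_simps)
  then show ?thesis using ident1[OF assms] by simp
qed

lemma o2: assumes "0 < a" "a < 1" shows "a*(1-a)*DD2 a + D2 a + 3/4 * Y2 a = 0"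
proof -
  have b: "0 < 1 - a" "1 - a < 1" using assms by auto
  have "a*(1-a)*DD2 a + D2 a + 3/4 * Y2 a = (1-a)^2/4 * (3*(1-a)*(1-(1-a))*G 4 (1-a) + 2*(3-4*(1-a))*G 3 (1-a) - 5*G 2 (1-a))"
    unfolding DD2_def D2_def Y2_def by (simp add: field_simps power2_eq_square)
  then show ?thesis using ident2[OF b] by simp
qed

definition "W a = Y1 a * D2 a - D1 a * Y2 a"

lemma Q_const: "\<exists>c. \<forall>a\<in>{0<..<1}. a/(1-a) * W a = c"
proof (rule has_field_derivative_zero_constant)
  fix a :: real assume "a \<in> {0<..<1}"
  then have a: "0 < a" "a < 1" by auto
  show "((\<lambda>a. a/(1-a) * W a) has_field_derivative 0) (at a within {0<..<1})"
    unfolding W_def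
    by (rule has_field_derivative_at_within, rule wr[of a Y1 D1 DD1 Y2 D2 DD2, OF a Y1_d[OF a] D1_d[OF a] Y2_d[OF a] D2_d[OF a] o1[OF a] o2[OF a]])
qed simp

lemma h_cont: assumes "a < 1" shows "continuous_on {0..pi/2} (h k a)"
  unfolding h_def using base_lt[of a] assms
  by (intro continuous_intros) (auto simp: less_le)

lemma Y1_lb: assumes "0 < a" "a < 1"
  shows "integral {0..pi/2} (\<lambda>u. cos u ^ 4) \<le> Y1 a"
proof -
  have "integral {0..pi/2} (\<lambda>u. cos u ^ 4) \<le> integral {0..pi/2} (h 0 a)"
  proof (rule integral_le)
    show "(\<lambda>u. cos u ^ 4) integrable_on {0..pi/2}" by (intro integrable_continuous_interval continuous_intros)
    show "h 0 a integrable_on {0..pi/2}" using h_int assms by simp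
  next
    fix u :: real assume "u \<in> {0..pi/2}"
    define w where "w = 1 - a * sin u ^ 2"
    have s0: "0 \<le> sin u ^ 2" by simp
    have s1: "sin u ^ 2 \<le> 1" using abs_sin_le_one[of u] by (simp add: abs_square_le_1)
    have w0: "0 < w" unfolding w_def using base_pos assms by simp
    have w1: "w \<le> 1" unfolding w_def using assms s0 by simp
    have wc: "cos u ^ 2 \<le> w" unfolding w_def using assms s0 mult_left_le_one_le[of "sin u ^ 2" a]
      by (simp add: cos_squared_eq)
    have "cos u ^ 4 = (cos u ^ 2) ^ 2" by simp
    also have "\<dots> \<le> w ^ 2" using wc by (intro power_mono) auto
    also have "w ^ 2 = w powr 2" using w0 by (simp add: powr_realpow)
    also have "w powr 2 \<le> w powr (3/2)" using w0 w1 by (intro powr_mono') auto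
    also have "w powr (3/2) = h 0 a u" unfolding h_def w_def by simp
    finally show "cos u ^ 4 \<le> h 0 a u" .
  qed
  also have "integral {0..pi/2} (h 0 a) = Y1 a" unfolding Y1_def G_def h_def[abs_def] by simp
  finally show ?thesis .
qed

lemma L_pos: "0 < integral {0..pi/2} (\<lambda>u. cos u ^ 4)"
proof -
  have "integral {0..pi/2} (\<lambda>u. 0::real) < integral {0..pi/2} (\<lambda>u. cos u ^ 4)"
  proof (rule integral_less_real)
    show "continuous_on {0..pi/2} (\<lambda>u. cos u ^ 4)" by (intro continuous_intros)
    fix u assume "u \<in> {0<..<pi/2}"
    then have "0 < cos u" by (intro cos_gt_zero_pi) auto
    then show "0 < cos u ^ 4" by simp
  next
    show "{0<..<pi/2} \<noteq> {}" using pi_gt_zero by (simp add: not_le)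
  next
    show "continuous_on {0..pi/2} (\<lambda>u. 0::real)" by simp
  qed
  then show ?thesis by simp
qed

lemma G2_ub: assumes "0 < b" "b \<le> 1/2" shows "G 2 b \<le> 4"
proof -
  have "G 2 b = integral {0..pi/2} (h 2 b)" unfolding G_def h_def[abs_def] by simp
  also have "\<dots> \<le> integral {0..pi/2} (\<lambda>u. 2::real)"
  proof (rule integral_le)
    show "h 2 b integrable_on {0..pi/2}" using h_int assms by simp
    show "(\<lambda>u. 2::real) integrable_on {0..pi/2}" by (intro integrable_continuous_interval continuous_intros)
  next
    fix u :: real assume "u \<in> {0..pi/2}"
    define w where "w = 1 - b * sin u ^ 2"
    have s0: "0 \<le> sin u ^ 2" by simp
    have s1: "sin u ^ 2 \<le> 1" using abs_sin_le_one[of u] by (simp add: abs_square_le_1)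
    have "b * sin u ^ 2 \<le> 1/2" using assms s0 s1 mult_mono[of b "1/2" "sin u ^ 2" 1] by simp
    then have w2: "1/2 \<le> w" unfolding w_def by simp
    have w1: "w \<le> 1" unfolding w_def using assms s0 by simp
    have s4: "sin u ^ (2*2) \<le> 1" 
    proof -
      have "sin u ^ (2*2) = sin u ^ 2 * sin u ^ 2" by (rule power_mult[THEN trans]) (simp only: power2_eq_square)
      also have "\<dots> \<le> 1" using s0 s1 by (intro mult_le_one)
      finally show ?thesis .
    qed
    have e: "(3/2 - real 2) = -(1/2::real)" by simp
    have "w powr (3/2 - real 2) = w powr (-(1/2))" by (simp only: e)
    also have "\<dots> \<le> w powr (-1)" using w1 w2 by (intro powr_mono') auto
    also have "\<dots> = inverse (w powr 1)" by (rule powr_minus)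
    also have "w powr 1 = w" using w2 by simp
    also have "inverse w = 1/w" by (rule inverse_eq_divide)
    also have "\<dots> \<le> 2" using w2 by (simp add: field_simps)
    finally have p: "w powr (3/2 - real 2) \<le> 2" .
    have "h 2 b u = sin u ^ (2*2) * w powr (3/2 - real 2)" unfolding h_def w_def by (rule refl)
    also have "\<dots> \<le> 1 * 2" using s4 p by (intro mult_mono) auto
    finally show "h 2 b u \<le> 2" by (simp only: mult_1)
  qed
  also have "\<dots> = pi" by simp
  also have "\<dots> \<le> 4" using pi_less_4 by simp
  finally show ?thesis .
qed

lemma G2_pos: "0 < G 2 (1/2)"
proof -
  have "integral {0..pi/2} (\<lambda>u. 0::real) < integral {0..pi/2} (h 2 (1/2))"
  proof (rule integral_less_real)
    show "continuous_on {0..pi/2} (h 2 (1/2))" using h_cont by simp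
    fix u assume "u \<in> {0<..<pi/2}"
    then have "0 < sin u" by (intro sin_gt_zero) auto
    then show "0 < h 2 (1/2) u" unfolding h_def using base_pos[of "1/2" u] by simp
  next
    show "{0<..<pi/2} \<noteq> {}" using pi_gt_zero by (simp add: not_le)
  next
    show "continuous_on {0..pi/2} (\<lambda>u. 0::real)" by simp
  qed
  then show ?thesis unfolding G_def h_def[abs_def] by simp
qed

lemma Y1_pos: "0 < a \<Longrightarrow> a < 1 \<Longrightarrow> 0 < Y1 a"
  using Y1_lb L_pos by (meson less_le_trans)

lemma c_ne: assumes c: "\<forall>a\<in>{0<..<1}. a/(1-a) * W a = c" shows "c \<noteq> 0"
proof
  assume c0: "c = 0"
  have W0: "W a = 0" if "a \<in> {0<..<1}" for a
  proof -
    have "a/(1-a) \<noteq> 0" using that by auto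
    then show ?thesis using c c0 that by auto
  qed
  have "\<exists>r. \<forall>a\<in>{0<..<1}. Y2 a / Y1 a = r"
  proof (rule has_field_derivative_zero_constant)
    fix a :: real assume a': "a \<in> {0<..<1}"
    then have a: "0 < a" "a < 1" by auto
    have "Y1 a \<noteq> 0" using Y1_pos[OF a] by simp
    from DERIV_divide[OF Y2_d[OF a] Y1_d[OF a] this]
    have "((\<lambda>a. Y2 a / Y1 a) has_real_derivative (D2 a * Y1 a - Y2 a * D1 a) / (Y1 a * Y1 a)) (at a)" .
    moreover have "D2 a * Y1 a - Y2 a * D1 a = W a" unfolding W_def by (simp add: mult.commute)
    ultimately show "((\<lambda>a. Y2 a / Y1 a) has_field_derivative 0) (at a within {0<..<1})"
      using W0[OF a'] by (auto intro: has_field_derivative_at_within)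
  qed simp
  then obtain r where r: "\<And>a. a \<in> {0<..<1} \<Longrightarrow> Y2 a / Y1 a = r" by blast
  define L where "L = integral {0..pi/2} (\<lambda>u. cos u ^ 4)"
  have L0: "0 < L" unfolding L_def by (rule L_pos)
  have "0 < Y2 (1/2)" unfolding Y2_def using G2_pos by simp
  moreover have "0 < Y1 (1/2)" by (rule Y1_pos) auto
  ultimately have r0: "0 < r" using r[of "1/2"] by auto
  define b where "b = min (1/2) (r*L/8)"
  have b0: "0 < b" "b \<le> 1/2" "b \<le> r*L/8" unfolding b_def using r0 L0 by auto
  have a: "1 - b \<in> {0<..<1}" using b0 by auto
  have "Y2 (1-b) = r * Y1 (1-b)" using r[OF a] Y1_pos[of "1-b"] a by (auto simp: field_simps)
  moreover have "r * L \<le> r * Y1 (1-b)" using Y1_lb[of "1-b"] a r0 unfolding L_def by auto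
  moreover have "Y2 (1-b) \<le> 4 * b^2"
  proof -
    have "Y2 (1-b) = b^2 * G 2 b" unfolding Y2_def by simp
    also have "\<dots> \<le> b^2 * 4" using G2_ub[OF b0(1,2)] by (intro mult_left_mono) auto
    finally show ?thesis by simp
  qed
  moreover have "4 * b^2 \<le> 2 * b"
  proof -
    have "b * b \<le> b * (1/2)" using b0 by (intro mult_left_mono) auto
    then show ?thesis by (simp add: power2_eq_square)
  qed
  moreover have "0 < r * L" using r0 L0 by simp
  ultimately show False using b0 by linarith
qed

lemma interior_at: "1 < (x::real) \<Longrightarrow> at x within {1..} = at x"
  by (rule at_within_interior) simp

lemma dR_eq: assumes "1 < x" "(f has_real_derivative D) (at x)" shows "dR f x = D"
  unfolding dR_def interior_at[OF assms(1)]
  using assms(2) DERIV_unique by blast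

lemma psi1_eq: assumes "x \<noteq> 0" shows "psi1 x = 3/2 * Y1 (1/x^2)"
proof -
  have "(\<lambda>u. (1 - sin u ^ 2 / x ^ 2) powr (3/2)) = (\<lambda>u. sin u ^ (2*0) * (1 - 1/x^2 * sin u ^ 2) powr (3/2 - real 0))"
    by (rule ext) simp
  then show ?thesis unfolding psi1_def Y1_def G_def by simp
qed

lemma powr_m: fixes w :: real assumes "0 < w" shows "w powr (3/2 - real 2) = 1 / sqrt w"
proof -
  have e: "(3/2 - real 2) = -(1/2::real)" by simp
  have "w powr (3/2 - real 2) = inverse (w powr (1/2))" by (simp only: e powr_minus)
  also have "w powr (1/2) = sqrt w" using assms by (simp add: powr_half_sqrt)
  finally show ?thesis by (simp add: inverse_eq_divide)
qed

lemma psi2_eq: assumes "1 < x" shows "psi2 x = 3/2 * Y2 (1/x^2)"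
proof -
  have b: "1 - 1/x^2 < 1" using assms by simp
  have "(\<lambda>v. sin v ^ 4 / sqrt (1 - (1 - 1 / x ^ 2) * sin v ^ 2)) = (\<lambda>u. sin u ^ (2*2) * (1 - (1 - 1/x^2) * sin u ^ 2) powr (3/2 - real 2))"
  proof (rule ext)
    fix u
    show "sin u ^ 4 / sqrt (1 - (1 - 1 / x ^ 2) * sin u ^ 2) = sin u ^ (2*2) * (1 - (1 - 1/x^2) * sin u ^ 2) powr (3/2 - real 2)"
      using powr_m[OF base_pos[OF b, of u]] by simp
  qed
  then show ?thesis unfolding psi2_def Y2_def G_def by simp
qed

lemma alpha_d: assumes "1 < x" shows "((\<lambda>x. 1/x^2) has_real_derivative -2/x^3) (at x)"
proof -
  have "x \<noteq> 0" using assms by simp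
  then show ?thesis
    by (auto intro!: derivative_eq_intros simp: field_simps power2_eq_square power3_eq_cube)
qed

lemma alpha_in: fixes x :: real assumes "1 < x" shows "0 < 1/x^2" "1/x^2 < 1"
proof -
  have "1 < x^2" using one_less_power[OF assms, of 2] by simp
  then show "0 < 1/x^2" "1/x^2 < 1" by (auto simp: divide_less_eq)
qed

lemma psi1_d: assumes "1 < x" shows "(psi1 has_real_derivative 3/2 * (D1 (1/x^2) * (-2/x^3))) (at x)"
proof -
  have "((\<lambda>x. 3/2 * Y1 (1/x^2)) has_real_derivative 3/2 * (D1 (1/x^2) * (-2/x^3))) (at x)"
    by (rule DERIV_cmult[OF DERIV_chain2[OF Y1_d[OF alpha_in[OF assms]] alpha_d[OF assms]]])
  then show ?thesis
    by (rule has_field_derivative_transform_within_open[where S="{0<..}"]) (use assms psi1_eq in auto)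
qed

lemma psi2_d: assumes "1 < x" shows "(psi2 has_real_derivative 3/2 * (D2 (1/x^2) * (-2/x^3))) (at x)"
proof -
  have "((\<lambda>x. 3/2 * Y2 (1/x^2)) has_real_derivative 3/2 * (D2 (1/x^2) * (-2/x^3))) (at x)"
    by (rule DERIV_cmult[OF DERIV_chain2[OF Y2_d[OF alpha_in[OF assms]] alpha_d[OF assms]]])
  then show ?thesis
    by (rule has_field_derivative_transform_within_open[where S="{1<..}"]) (use assms psi2_eq in auto)
qed

lemma omega_eq: assumes c: "\<forall>a\<in>{0<..<1}. a/(1-a) * W a = c" and x: "1 < x"
  shows "omega x = -(9/2) * c * ((x^2 - 1) / x^3)"
proof -
  define al where "al = 1/x^2"
  have al: "al \<in> {0<..<1}" using alpha_in[OF x] unfolding al_def by auto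
  have x0: "x \<noteq> 0" using x by simp
  have "omega x = (3/2 * (D2 al * (-2/x^3))) * (3/2 * Y1 al) - (3/2 * Y2 al) * (3/2 * (D1 al * (-2/x^3)))"
    unfolding omega_def dR_eq[OF x psi1_d[OF x]] dR_eq[OF x psi2_d[OF x]] psi1_eq[OF x0] psi2_eq[OF x] al_def ..
  also have "\<dots> = -(9/2) / x^3 * W al" unfolding W_def by (simp add: field_simps) (simp only: add_divide_distrib[symmetric], simp)
  also have "W al = c * ((1 - al) / al)"
  proof -
    have "al/(1-al) * W al = c" using c al by auto
    moreover have "al \<noteq> 0" "1 - al \<noteq> 0" using al by auto
    ultimately show ?thesis by (auto simp: field_simps)
  qed
  also have "(1 - al) / al = x^2 - 1" unfolding al_def using x0 by (simp add: field_simps)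
  finally show ?thesis by (simp add: field_simps)
qed

theorem mainTheorem10:
  fixes tau :: real
  assumes "1 < tau" and "tau < 2"
    and "(omega has_real_derivative 0) (at tau within {1..})"
    and "\<forall>x. 1 \<le> x \<and> x < tau \<longrightarrow> \<not> (omega has_real_derivative 0) (at x within {1..})"
  shows "tau > 1.732"
proof -
  obtain c where c: "\<forall>a\<in>{0<..<1}. a/(1-a) * W a = c" using Q_const by blast
  have cne: "c \<noteq> 0" using c_ne[OF c] .
  define K where "K = -(9/2) * c"
  have K0: "K \<noteq> 0" unfolding K_def using cne by simp
  have t0: "tau \<noteq> 0" using assms(1) by simp
  have d1: "((\<lambda>x. x^2 - 1) has_real_derivative 2 * tau) (at tau)"
    by (auto intro!: derivative_eq_intros)
  have d2: "((\<lambda>x. x^3) has_real_derivative 3 * tau^2) (at tau)"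
    by (auto intro!: derivative_eq_intros)
  have t3: "tau^3 \<noteq> 0" using t0 by simp
  define V where "V = K * ((2 * tau * tau^3 - (tau^2 - 1) * (3 * tau^2)) / (tau^3 * tau^3))"
  have "((\<lambda>x. K * ((x^2 - 1) / x^3)) has_real_derivative V) (at tau)"
    unfolding V_def by (rule DERIV_cmult[OF DERIV_divide[OF d1 d2 t3]])
  then have "(omega has_real_derivative V) (at tau)"
    by (rule has_field_derivative_transform_within_open[where S="{1<..}"])
       (use assms(1) omega_eq[OF c] in \<open>auto simp: K_def\<close>)
  moreover have "(omega has_real_derivative 0) (at tau)"
    using assms(3) interior_at[OF assms(1)] by simp
  ultimately have V0: "V = 0" using DERIV_unique by blast
  have "(2 * tau * tau^3 - (tau^2 - 1) * (3 * tau^2)) / (tau^3 * tau^3) = 0"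
    using V0 K0 unfolding V_def by simp
  then have "2 * tau * tau^3 - (tau^2 - 1) * (3 * tau^2) = 0" using t3 by simp
  then have "tau^2 * (3 - tau^2) = 0" by (simp add: algebra_simps power2_eq_square power3_eq_cube)
  then have sq: "tau^2 = 3" using t0 by simp
  show ?thesis
  proof (rule ccontr)
    assume "\<not> tau > 1.732"
    then have "tau \<le> 1.732" by simp
    then have "tau * tau \<le> 1.732 * 1.732" using assms(1) by (intro mult_mono) auto
    then show False using sq by (simp add: power2_eq_square)
  qed
qed
end
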